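(* The set $\mathcal{AN}_{\operatorname{add}(\mathcal N)}$ is strongly $\mathfrak c$-algebrable in $\left(\mathbb R^{\mathbb R}\right)^{\operatorname{add}(\mathcal N)}$ (in ZFC).
   Context: For a regular infinite cardinal $\kappa$, a $\kappa$-sequence $(x_\alpha)_{\alpha<\kappa}$ converges to $x$ if for every neighbourhood $U$ of $x$ there is $\alpha_0<\kappa$ with $x_\alpha\in U$ for all $\alpha_0<\alpha<\kappa$; $\left(\mathbb R^{\mathbb R}\right)^{\kappa}$ is the commutative real algebra of $\kappa$-sequences of functions $\mathbb R\to\mathbb R$ with indexwise operations. $\operatorname{add}(\mathcal N)$ is the least cardinality of a family of Lebesgue null sets whose union is not null. $\mathcal{AN}_{\kappa}$: $\kappa$-sequences of Lebesgue measurable functions $f_\alpha:\mathbb R\to\mathbb R$ converging pointwise a.e. to a function that is not Lebesgue measurable. $S$ is strongly $\mu$-algebrable if there is a set $X$ of $\mu$ algebraically independent elements such that every nonzero element of the (non-unital) algebra generated by $X$ belongs to $S$. *)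

theory Defs
  imports "HOL-Analysis.Analysis" "HOL-Library.Poly_Mapping"
begin

text \<open>Index sets of kappa-sequences: a cardinal well-order r on a type 'i (Field r = UNIV).
  The ordinal "alpha < beta" is "(alpha, beta) \<in> r \<and> alpha \<noteq> beta".\<close>

definition kconv :: "'i rel \<Rightarrow> ('i \<Rightarrow> 'b::topological_space) \<Rightarrow> 'b \<Rightarrow> bool" where
  "kconv r s L \<longleftrightarrow>
     (\<forall>U. open U \<and> L \<in> U \<longrightarrow>
        (\<exists>a0\<in>Field r. \<forall>a. (a0, a) \<in> r \<and> a \<noteq> a0 \<longrightarrow> s a \<in> U))"

definition is_addN :: "'i rel \<Rightarrow> bool" where
  "is_addN r \<longleftrightarrow> Card_order r \<and>
     (\<exists>F. F \<subseteq> null_sets (lebesgue :: real measure) \<and> ordIso2 (card_of F) r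
          \<and> \<Union>F \<notin> null_sets (lebesgue :: real measure)) \<and>
     (\<forall>F. F \<subseteq> null_sets (lebesgue :: real measure) \<and> ordLess2 (card_of F) r
          \<longrightarrow> \<Union>F \<in> null_sets (lebesgue :: real measure))"

definition AN :: "'i rel \<Rightarrow> ('i \<Rightarrow> real \<Rightarrow> real) set" where
  "AN r = {f. (\<forall>a. f a \<in> borel_measurable lebesgue) \<and>
              (\<exists>g. g \<notin> borel_measurable lebesgue \<and>
                   (AE t in lebesgue. kconv r (\<lambda>a. f a t) (g t)))}"

definition seq_add :: "('i \<Rightarrow> real \<Rightarrow> real) \<Rightarrow> ('i \<Rightarrow> real \<Rightarrow> real) \<Rightarrow> ('i \<Rightarrow> real \<Rightarrow> real)" where
  "seq_add f g = (\<lambda>a t. f a t + g a t)"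
definition seq_mult :: "('i \<Rightarrow> real \<Rightarrow> real) \<Rightarrow> ('i \<Rightarrow> real \<Rightarrow> real) \<Rightarrow> ('i \<Rightarrow> real \<Rightarrow> real)" where
  "seq_mult f g = (\<lambda>a t. f a t * g a t)"
definition seq_scale :: "real \<Rightarrow> ('i \<Rightarrow> real \<Rightarrow> real) \<Rightarrow> ('i \<Rightarrow> real \<Rightarrow> real)" where
  "seq_scale c f = (\<lambda>a t. c * f a t)"

inductive_set gen_alg :: "('i \<Rightarrow> real \<Rightarrow> real) set \<Rightarrow> ('i \<Rightarrow> real \<Rightarrow> real) set"
  for X where
  gen_base: "x \<in> X \<Longrightarrow> x \<in> gen_alg X"
| gen_add: "f \<in> gen_alg X \<Longrightarrow> g \<in> gen_alg X \<Longrightarrow> seq_add f g \<in> gen_alg X"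
| gen_mult: "f \<in> gen_alg X \<Longrightarrow> g \<in> gen_alg X \<Longrightarrow> seq_mult f g \<in> gen_alg X"
| gen_scale: "f \<in> gen_alg X \<Longrightarrow> seq_scale c f \<in> gen_alg X"

text \<open>Polynomials in the variables 0,1,2,... with real coefficients, represented as finitely
  supported maps from monomials (finitely supported exponent vectors) to coefficients;
  evaluation at xs (indexwise/pointwise).\<close>
definition poly_eval :: "((nat \<Rightarrow>\<^sub>0 nat) \<Rightarrow>\<^sub>0 real) \<Rightarrow> (nat \<Rightarrow> ('i \<Rightarrow> real \<Rightarrow> real)) \<Rightarrow> ('i \<Rightarrow> real \<Rightarrow> real)" where
  "poly_eval p xs = (\<lambda>a t. \<Sum>m\<in>Poly_Mapping.keys p. Poly_Mapping.lookup p m * (\<Prod>i\<in>Poly_Mapping.keys (m :: nat \<Rightarrow>\<^sub>0 nat). (xs i a t) ^ Poly_Mapping.lookup m i))"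

text \<open>Algebraic independence (in the sense of non-unital algebras): for distinct
  x_0,...,x_{n-1} in X and any nonzero polynomial P in n variables without constant term,
  P(x_0,...,x_{n-1}) \<noteq> 0.\<close>
definition alg_indep :: "('i \<Rightarrow> real \<Rightarrow> real) set \<Rightarrow> bool" where
  "alg_indep X \<longleftrightarrow>
     (\<forall>n xs p. inj_on xs {..<n} \<and> xs ` {..<n} \<subseteq> X \<and> p \<noteq> 0 \<and> Poly_Mapping.lookup p 0 = 0 \<and>
        (\<forall>m\<in>Poly_Mapping.keys p. Poly_Mapping.keys m \<subseteq> {..<n}) \<longrightarrow> poly_eval p xs \<noteq> (\<lambda>a t. 0))"

text \<open>S is strongly mu-algebrable, where mu is the cardinality of the set M.\<close>
definition strongly_algebrable :: "'m set \<Rightarrow> ('i \<Rightarrow> real \<Rightarrow> real) set \<Rightarrow> bool" where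
  "strongly_algebrable M S \<longleftrightarrow>
     (\<exists>X. ordIso2 (card_of X) (card_of M) \<and> alg_indep X \<and>
          (\<forall>f\<in>gen_alg X. f \<noteq> (\<lambda>a t. 0) \<longrightarrow> f \<in> S))"

end

theory Submission
  imports Defs "HOL-Complex_Analysis.Conformal_Mappings" "HOL-Library.Nat_Bijection"
begin


lemma lebesgue_complete_subset:
  "A \<subseteq> B \<Longrightarrow> B \<in> null_sets lebesgue \<Longrightarrow> A \<in> null_sets lebesgue"
  by (rule completion.complete2)

definition vrep :: "real \<Rightarrow> real" where
  "vrep x = (SOME v. v \<in> {0..1} \<and> v - x \<in> \<rat>)"

lemma vrep: "vrep x \<in> {0..1} \<and> vrep x - x \<in> \<rat>"
  unfolding vrep_def
proof (rule someI[where x = "x - of_int \<lfloor>x\<rfloor>"])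
  show "x - of_int \<lfloor>x\<rfloor> \<in> {0..1} \<and> x - of_int \<lfloor>x\<rfloor> - x \<in> \<rat>"
    by (auto simp: floor_le_iff) (smt (verit) of_int_floor_le real_of_int_floor_add_one_gt)
qed

lemma vrep_eq: assumes "x - x' \<in> \<rat>" shows "vrep x = vrep x'"
proof -
  have "(\<lambda>v. v \<in> {0..1} \<and> v - x \<in> \<rat>) = (\<lambda>v. v \<in> {0..1} \<and> v - x' \<in> \<rat>)"
  proof (rule ext)
    fix v
    have "v - x' = (v - x) + (x - x')" "v - x = (v - x') - (x - x')" by auto
    then show "(v \<in> {0..1} \<and> v - x \<in> \<rat>) = (v \<in> {0..1} \<and> v - x' \<in> \<rat>)"
      using assms by (metis Rats_add Rats_diff)
  qed
  then show ?thesis unfolding vrep_def by simp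
qed

definition Vq :: "real \<Rightarrow> real set" where
  "Vq q = (\<lambda>x. vrep x + q) ` UNIV"

lemma Vq_cover: "x \<in> Vq (x - vrep x)"
  unfolding Vq_def by (rule image_eqI[of _ _ x]) auto

lemma Vq_rat: "x - vrep x \<in> \<rat>"
  using vrep[of x] by (metis Rats_minus_iff minus_diff_eq)

lemma Vq_disj:
  assumes "a \<in> Vq q" "b \<in> Vq q" "a - b \<in> \<rat>" shows "a = b"
proof -
  obtain x y where a: "a = vrep x + q" and b: "b = vrep y + q" using assms unfolding Vq_def by auto
  have "vrep x - vrep y \<in> \<rat>" using assms(3) a b by simp
  moreover have "x - y = (x - vrep x) + (vrep x - vrep y) + (vrep y - y)" by simp
  ultimately have "x - y \<in> \<rat>"
    using vrep[of x] vrep[of y] by (metis Rats_add Rats_minus_iff minus_diff_eq)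
  then show ?thesis using a b vrep_eq by simp
qed

lemma Vq_null:
  assumes W: "W \<subseteq> Vq q" "W \<in> sets lebesgue"
  shows "W \<in> null_sets lebesgue"
proof -
  define T where "T n = (+) (1 / real (Suc n)) ` W" for n
  have Wsub: "W \<subseteq> {q..q+1}" using W(1) vrep unfolding Vq_def by fastforce
  then have Wlm: "W \<in> lmeasurable"
    using W(2) by (intro bounded_set_imp_lmeasurable) (auto intro: bounded_subset[OF bounded_closed_interval])
  have Tsets: "range T \<subseteq> sets lebesgue"
    using W(2) unfolding T_def by (auto intro: lebesgue_sets_translation)
  have Tdisj: "disjoint_family T"
  unfolding disjoint_family_on_def
  proof (intro ballI impI)
    fix m n :: nat assume "m \<noteq> n"
    show "T m \<inter> T n = {}"
    proof (rule ccontr)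
      assume "T m \<inter> T n \<noteq> {}"
      then obtain a b where ab: "a \<in> W" "b \<in> W" "1 / real (Suc m) + a = 1 / real (Suc n) + b"
        unfolding T_def by auto
      then have "a - b = 1 / real (Suc n) - 1 / real (Suc m)" by simp
      then have "a - b \<in> \<rat>" by simp
      then have "a = b" using Vq_disj ab W(1) by blast
      then have "real (Suc m) = real (Suc n)" using ab(3) by (simp add: field_simps)
      then show False using \<open>m \<noteq> n\<close> by simp
    qed
  qed
  have Tsub: "(\<Union>n. T n) \<subseteq> {q..q+2}"
  proof -
    have "1 / real (Suc n) \<le> 1" for n by (simp add: field_simps)
    moreover have "0 \<le> 1 / real (Suc n)" for n by simp
    ultimately show ?thesis using Wsub unfolding T_def
    proof (intro subsetI)
      fix x assume h: "\<And>n. 1 / real (Suc n) \<le> 1" "\<And>n. 0 \<le> 1 / real (Suc n)" "W \<subseteq> {q..q + 1}"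
        and "x \<in> (\<Union>n. (+) (1 / real (Suc n)) ` W)"
      then obtain n w where "w \<in> W" "x = 1 / real (Suc n) + w" by auto
      moreover have "w \<in> {q..q+1}" using \<open>w \<in> W\<close> h(3) by blast
      moreover have "0 \<le> 1 / real (Suc n)" "1 / real (Suc n) \<le> 1" using h(1)[of n] h(2)[of n] by auto
      ultimately show "x \<in> {q..q+2}" unfolding atLeastAtMost_iff by linarith
    qed
  qed
  have "emeasure lebesgue (\<Union>n. T n) \<le> emeasure lebesgue {q..q+2}"
    by (rule emeasure_mono[OF Tsub]) auto
  also have "\<dots> < \<infinity>" by simp
  finally have fin: "emeasure lebesgue (\<Union>n. T n) \<noteq> \<infinity>" by simp
  have "(\<lambda>n. measure lebesgue (T n)) sums measure lebesgue (\<Union>n. T n)"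
    by (rule measure_UNION[OF Tsets Tdisj fin])
  moreover have "measure lebesgue (T n) = measure lebesgue W" for n
    unfolding T_def by (rule measure_translation)
  ultimately have "summable (\<lambda>n::nat. measure lebesgue W)" by (simp add: sums_summable)
  then have "measure lebesgue W = 0" by (simp add: summable_const_iff)
  then show ?thesis using Wlm
    by (intro null_setsI) (auto simp: emeasure_eq_measure2)
qed

lemma exists_nonmeasurable_subset:
  fixes E :: "real set"
  assumes "E \<notin> null_sets lebesgue"
  shows "\<exists>B\<subseteq>E. B \<notin> sets lebesgue"
proof (rule ccontr)
  assume "\<not> ?thesis"
  then have all: "E \<inter> Vq q \<in> sets lebesgue" for q by auto
  have "E = (\<Union>q\<in>\<rat>. E \<inter> Vq q)"
    using Vq_cover Vq_rat by blast
  moreover have "(\<Union>q\<in>\<rat>. E \<inter> Vq q) \<in> null_sets lebesgue"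
    using all Vq_null by (intro null_sets_UN' countable_rat) (meson Int_lower2)
  ultimately show False using assms by simp
qed




definition ev :: "(real \<Rightarrow> real) \<Rightarrow> real \<Rightarrow> real" where
  "ev A y = (\<Sum>r\<in>{r. A r \<noteq> 0}. A r * exp (r * y))"

definition good_rates :: "(real \<Rightarrow> real) \<Rightarrow> bool" where
  "good_rates A \<longleftrightarrow> finite {r. A r \<noteq> 0} \<and> (\<forall>r. A r \<noteq> 0 \<longrightarrow> r > 0)"

lemma ev_superset:
  assumes "finite R" "{r. A r \<noteq> 0} \<subseteq> R"
  shows "ev A y = (\<Sum>r\<in>R. A r * exp (r * y))"
  unfolding ev_def by (rule sum.mono_neutral_left) (use assms in auto)

lemma good_rates_diff: "good_rates A \<Longrightarrow> good_rates B \<Longrightarrow> good_rates (\<lambda>r. A r - B r)"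
proof -
  assume a: "good_rates A" "good_rates B"
  have sub: "{r. A r - B r \<noteq> 0} \<subseteq> {r. A r \<noteq> 0} \<union> {r. B r \<noteq> 0}" by auto
  show ?thesis unfolding good_rates_def
  proof (intro conjI allI impI)
    show "finite {r. A r - B r \<noteq> 0}" using a sub unfolding good_rates_def by (meson finite_Un finite_subset)
    fix r assume "A r - B r \<noteq> 0"
    then have "A r \<noteq> 0 \<or> B r \<noteq> 0" by auto
    then show "r > 0" using a unfolding good_rates_def by auto
  qed
qed

lemma good_rates_add: "good_rates A \<Longrightarrow> good_rates B \<Longrightarrow> good_rates (\<lambda>r. A r + B r)"
proof -
  assume a: "good_rates A" "good_rates B"
  have sub: "{r. A r + B r \<noteq> 0} \<subseteq> {r. A r \<noteq> 0} \<union> {r. B r \<noteq> 0}" by auto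
  show ?thesis unfolding good_rates_def
  proof (intro conjI allI impI)
    show "finite {r. A r + B r \<noteq> 0}" using a sub unfolding good_rates_def by (meson finite_Un finite_subset)
    fix r assume "A r + B r \<noteq> 0"
    then have "A r \<noteq> 0 \<or> B r \<noteq> 0" by auto
    then show "r > 0" using a unfolding good_rates_def by auto
  qed
qed

lemma ev_diff:
  assumes "good_rates A" "good_rates B"
  shows "ev A y - ev B y = ev (\<lambda>r. A r - B r) y"
proof -
  let ?R = "{r. A r \<noteq> 0} \<union> {r. B r \<noteq> 0}"
  have f: "finite ?R" using assms unfolding good_rates_def by auto
  show ?thesis
    by (subst (1 2 3) ev_superset[OF f]) (auto simp: sum_subtractf left_diff_distrib)
qed

lemma ev_add:
  assumes "good_rates A" "good_rates B"
  shows "ev A y + ev B y = ev (\<lambda>r. A r + B r) y"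
proof -
  let ?R = "{r. A r \<noteq> 0} \<union> {r. B r \<noteq> 0}"
  have f: "finite ?R" using assms unfolding good_rates_def by auto
  show ?thesis
    by (subst (1 2 3) ev_superset[OF f]) (auto simp: sum.distrib distrib_right)
qed

lemma exp_neg_rate_tendsto: "r < (m::real) \<Longrightarrow> ((\<lambda>y. exp ((r - m) * y)) \<longlongrightarrow> 0) at_top"
proof -
  assume "r < m"
  then have "filterlim (\<lambda>y. (r - m) * y) at_bot at_top"
    by (intro filterlim_tendsto_neg_mult_at_bot[OF tendsto_const]) (auto simp: filterlim_ident)
  then show ?thesis by (rule filterlim_compose[OF exp_at_bot])
qed

lemma ev_lim:
  assumes g: "good_rates A" and ne: "{r. A r \<noteq> 0} \<noteq> {}"
  defines "m \<equiv> Max {r. A r \<noteq> 0}"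
  shows "((\<lambda>y. ev A y * exp (- (m * y))) \<longlongrightarrow> A m) at_top"
proof -
  let ?S = "{r. A r \<noteq> 0}"
  have fin: "finite ?S" using g unfolding good_rates_def by auto
  have mS: "m \<in> ?S" unfolding m_def using fin ne by (rule Max_in)
  have le: "r \<le> m" if "r \<in> ?S" for r unfolding m_def using fin that by simp
  have eq: "ev A y * exp (- (m * y)) = (\<Sum>r\<in>?S. A r * exp ((r - m) * y))" for y
    unfolding ev_def sum_distrib_right
    by (rule sum.cong) (auto simp: mult.assoc exp_add[symmetric] algebra_simps)
  have "((\<lambda>y. \<Sum>r\<in>?S. A r * exp ((r - m) * y)) \<longlongrightarrow> (\<Sum>r\<in>?S. if r = m then A m else 0)) at_top"
  proof (rule tendsto_sum)
    fix r assume r: "r \<in> ?S"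
    show "((\<lambda>y. A r * exp ((r - m) * y)) \<longlongrightarrow> (if r = m then A m else 0)) at_top"
    proof (cases "r = m")
      case True then show ?thesis by simp
    next
      case False
      then have "r < m" using le[OF r] by simp
      then show ?thesis using False
        by (auto intro!: tendsto_mult_right_zero exp_neg_rate_tendsto)
    qed
  qed
  moreover have "(\<Sum>r\<in>?S. if r = m then A m else 0) = A m"
    using mS fin by (simp add: sum.delta)
  ultimately show ?thesis by (simp add: eq)
qed

lemma ev_limits:
  assumes g: "good_rates A" and ne: "{r. A r \<noteq> 0} \<noteq> {}"
  defines "m \<equiv> Max {r. A r \<noteq> 0}"
  shows "A m > 0 \<Longrightarrow> filterlim (ev A) at_top at_top"
    and "A m < 0 \<Longrightarrow> filterlim (ev A) at_bot at_top"
proof -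
  let ?S = "{r. A r \<noteq> 0}"
  have fin: "finite ?S" using g unfolding good_rates_def by auto
  have mS: "m \<in> ?S" unfolding m_def using fin ne by (rule Max_in)
  then have mpos: "m > 0" using g unfolding good_rates_def by auto
  have L: "((\<lambda>y. ev A y * exp (- (m * y))) \<longlongrightarrow> A m) at_top"
    unfolding m_def using ev_lim[OF g ne] .
  have E: "filterlim (\<lambda>y. exp (m * y)) at_top at_top"
    by (rule filterlim_compose[OF exp_at_top])
       (intro filterlim_tendsto_pos_mult_at_top[OF tendsto_const mpos] filterlim_ident)
  have eq: "ev A = (\<lambda>y. ev A y * exp (- (m * y)) * exp (m * y))"
    by (auto simp: mult.assoc exp_add[symmetric])
  show "A m > 0 \<Longrightarrow> filterlim (ev A) at_top at_top"
    by (subst eq, rule filterlim_tendsto_pos_mult_at_top[OF L _ E])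
  show "A m < 0 \<Longrightarrow> filterlim (ev A) at_bot at_top"
    by (subst eq, rule filterlim_tendsto_neg_mult_at_bot[OF L _ E])
qed

definition goodexp :: "(real \<Rightarrow> real) \<Rightarrow> bool" where
  "goodexp A \<longleftrightarrow> good_rates A \<and> (\<forall>r. A r \<ge> 0) \<and> (\<exists>r. A r \<noteq> 0)"

lemma goodexp_top: "goodexp A \<Longrightarrow> filterlim (ev A) at_top at_top"
proof -
  assume "goodexp A"
  then have g: "good_rates A" and ne: "{r. A r \<noteq> 0} \<noteq> {}" and pos: "\<And>r. A r \<ge> 0"
    unfolding goodexp_def by auto
  have fin: "finite {r. A r \<noteq> 0}" using g unfolding good_rates_def by auto
  have "A (Max {r. A r \<noteq> 0}) \<noteq> 0" using Max_in[OF fin ne] by simp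
  then have "A (Max {r. A r \<noteq> 0}) > 0" using pos by (simp add: order_less_le)
  then show ?thesis by (rule ev_limits(1)[OF g ne])
qed

lemma ev_compare:
  assumes "good_rates A" "good_rates B" "\<exists>r. A r \<noteq> B r"
  shows "filterlim (\<lambda>y. ev A y - ev B y) at_top at_top \<or> filterlim (\<lambda>y. ev A y - ev B y) at_bot at_top"
proof -
  let ?D = "\<lambda>r. A r - B r"
  have g: "good_rates ?D" using good_rates_diff assms by blast
  have ne: "{r. ?D r \<noteq> 0} \<noteq> {}" using assms(3) by auto
  have fin: "finite {r. ?D r \<noteq> 0}" using g unfolding good_rates_def by auto
  have nz: "?D (Max {r. ?D r \<noteq> 0}) \<noteq> 0" using Max_in[OF fin ne] by simp
  have eq: "(\<lambda>y. ev A y - ev B y) = ev ?D" using ev_diff[OF assms(1,2)] by auto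
  show ?thesis unfolding eq using ev_limits[OF g ne] nz by (meson linorder_neqE_linordered_idom)
qed




lemma finite_has_top:
  assumes "finite F" "F \<noteq> {}"
    and trans: "\<And>a b c. a \<in> F \<Longrightarrow> b \<in> F \<Longrightarrow> c \<in> F \<Longrightarrow> lt a b \<Longrightarrow> lt b c \<Longrightarrow> lt a c"
    and total: "\<And>a b. a \<in> F \<Longrightarrow> b \<in> F \<Longrightarrow> a \<noteq> b \<Longrightarrow> lt a b \<or> lt b a"
  shows "\<exists>m\<in>F. \<forall>x\<in>F. x \<noteq> m \<longrightarrow> lt x m"
  using assms
proof (induction F rule: finite_ne_induct)
  case (singleton x) then show ?case by auto
next
  case (insert x F)
  then obtain m where m: "m \<in> F" "\<forall>y\<in>F. y \<noteq> m \<longrightarrow> lt y m" by (metis insertCI)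
  show ?case
  proof (cases "lt m x")
    case True
    show ?thesis
    proof (rule bexI[of _ x], intro ballI impI)
      fix y assume y: "y \<in> insert x F" "y \<noteq> x"
      then have yF: "y \<in> F" by auto
      show "lt y x"
      proof (cases "y = m")
        case True then show ?thesis using \<open>lt m x\<close> by simp
      next
        case False
        then have "lt y m" using m yF by auto
        then show ?thesis using insert.prems(1)[of y m x] yF m(1) \<open>lt m x\<close> by auto
      qed
    qed auto
  next
    case False
    have "x \<noteq> m" using insert.hyps m(1) by auto
    then have "lt x m" using False insert.prems(2)[of x m] m(1) by auto
    then show ?thesis using m by (intro bexI[of _ m]) auto
  qed
qed

definition ltE :: "(real \<Rightarrow> real) \<Rightarrow> (real \<Rightarrow> real) \<Rightarrow> bool" where
  "ltE B B' \<longleftrightarrow> filterlim (\<lambda>y. ev B' y - ev B y) at_top at_top"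

lemma ltE_trans: "ltE a b \<Longrightarrow> ltE b c \<Longrightarrow> ltE a c"
  unfolding ltE_def
  by (drule (1) filterlim_at_top_add_at_top) (simp add: algebra_simps)

lemma ltE_total:
  assumes "goodexp a" "goodexp b" "a \<noteq> b" shows "ltE a b \<or> ltE b a"
proof -
  have "\<exists>r. b r \<noteq> a r" using assms(3) by auto
  then have "filterlim (\<lambda>y. ev b y - ev a y) at_top at_top \<or> filterlim (\<lambda>y. ev b y - ev a y) at_bot at_top"
    using ev_compare assms unfolding goodexp_def by blast
  then show ?thesis unfolding ltE_def
    by (auto simp: filterlim_uminus_at_bot)
qed

lemma Q_group:
  assumes "finite J"
  shows "(\<Sum>j\<in>J. c j * exp (ev (A j) y)) = (\<Sum>B\<in>A ` J. (\<Sum>j\<in>{j\<in>J. A j = B}. c j) * exp (ev B y))"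
  by (subst sum.image_gen[OF assms]) (auto simp: sum_distrib_right intro!: sum.cong)

lemma Q_grow:
  fixes J :: "'j set"
  assumes fin: "finite J" and good: "\<And>j. j \<in> J \<Longrightarrow> goodexp (A j)"
    and nz: "\<exists>B\<in>A ` J. (\<Sum>j\<in>{j\<in>J. A j = B}. c j) \<noteq> 0"
  shows "filterlim (\<lambda>y. \<bar>\<Sum>j\<in>J. c j * exp (ev (A j) y)\<bar>) at_top at_top"
proof -
  define C where "C B = (\<Sum>j\<in>{j\<in>J. A j = B}. c j)" for B
  define \<Phi> where "\<Phi> = {B \<in> A ` J. C B \<noteq> 0}"
  have finP: "finite \<Phi>" unfolding \<Phi>_def using fin by auto
  have neP: "\<Phi> \<noteq> {}" unfolding \<Phi>_def C_def using nz by auto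
  have goodP: "goodexp B" if "B \<in> \<Phi>" for B using that good unfolding \<Phi>_def by auto
  obtain M where M: "M \<in> \<Phi>" "\<forall>B\<in>\<Phi>. B \<noteq> M \<longrightarrow> ltE B M"
    using finite_has_top[OF finP neP, of ltE] ltE_trans ltE_total goodP by metis
  have gM: "goodexp M" using goodP M(1) .
  have CM: "C M \<noteq> 0" using M(1) unfolding \<Phi>_def by auto
  have Qeq: "(\<Sum>j\<in>J. c j * exp (ev (A j) y)) = (\<Sum>B\<in>A ` J. C B * exp (ev B y))" for y
    unfolding C_def by (rule Q_group[OF fin])
  have eq2: "(\<Sum>j\<in>J. c j * exp (ev (A j) y)) * exp (- ev M y) = (\<Sum>B\<in>A ` J. C B * exp (ev B y - ev M y))" for y
    unfolding Qeq sum_distrib_right by (rule sum.cong) (auto simp: exp_diff field_simps exp_minus)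
  have lim: "((\<lambda>y. \<Sum>B\<in>A ` J. C B * exp (ev B y - ev M y)) \<longlongrightarrow> (\<Sum>B\<in>A ` J. if B = M then C M else 0)) at_top"
  proof (rule tendsto_sum)
    fix B assume B: "B \<in> A ` J"
    show "((\<lambda>y. C B * exp (ev B y - ev M y)) \<longlongrightarrow> (if B = M then C M else 0)) at_top"
    proof (cases "B = M")
      case True then show ?thesis by simp
    next
      case False
      show ?thesis
      proof (cases "C B = 0")
        case True then show ?thesis using False by simp
      next
        case CB: False
        then have "B \<in> \<Phi>" unfolding \<Phi>_def using B by auto
        then have "ltE B M" using M False by auto
        then have "filterlim (\<lambda>y. ev B y - ev M y) at_bot at_top"
          unfolding ltE_def by (subst filterlim_uminus_at_bot) (simp add: algebra_simps)
        then have "((\<lambda>y. exp (ev B y - ev M y)) \<longlongrightarrow> 0) at_top"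
          by (rule filterlim_compose[OF exp_at_bot])
        then show ?thesis using False by (auto intro: tendsto_mult_right_zero)
      qed
    qed
  qed
  have "(\<Sum>B\<in>A ` J. if B = M then C M else 0) = C M"
    using M(1) fin unfolding \<Phi>_def by (simp add: sum.delta)
  with lim have lim2: "((\<lambda>y. \<bar>(\<Sum>j\<in>J. c j * exp (ev (A j) y)) * exp (- ev M y)\<bar>) \<longlongrightarrow> \<bar>C M\<bar>) at_top"
    unfolding eq2 by (auto intro: tendsto_rabs)
  have E: "filterlim (\<lambda>y. exp (ev M y)) at_top at_top"
    by (rule filterlim_compose[OF exp_at_top goodexp_top[OF gM]])
  have "filterlim (\<lambda>y. \<bar>(\<Sum>j\<in>J. c j * exp (ev (A j) y)) * exp (- ev M y)\<bar> * exp (ev M y)) at_top at_top"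
    by (rule filterlim_tendsto_pos_mult_at_top[OF lim2 _ E]) (use CM in simp)
  moreover have "\<bar>(\<Sum>j\<in>J. c j * exp (ev (A j) y)) * exp (- ev M y)\<bar> * exp (ev M y) = \<bar>\<Sum>j\<in>J. c j * exp (ev (A j) y)\<bar>" for y
    by (simp add: abs_mult exp_minus field_simps)
  ultimately show ?thesis by simp
qed

lemma Q_zero:
  assumes fin: "finite J" and z: "\<forall>B\<in>A ` J. (\<Sum>j\<in>{j\<in>J. A j = B}. c j) = 0"
  shows "(\<Sum>j\<in>J. c j * exp (ev (A j) y)) = 0"
  unfolding Q_group[OF fin] by (rule sum.neutral) (use z in auto)




definition Qfun :: "nat set \<Rightarrow> (nat \<Rightarrow> real) \<Rightarrow> (nat \<Rightarrow> real \<Rightarrow> real) \<Rightarrow> real \<Rightarrow> real" where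
  "Qfun J c A y = (\<Sum>j\<in>J. c j * exp (ev (A j) y))"

definition Qclass :: "(real \<Rightarrow> real) set" where
  "Qclass = {Qfun J c A | J c A. finite J \<and> (\<forall>j\<in>J. goodexp (A j))}"

lemma Qclass_add:
  assumes "Q1 \<in> Qclass" "Q2 \<in> Qclass" shows "(\<lambda>y. Q1 y + Q2 y) \<in> Qclass"
proof -
  obtain J1 c1 A1 where 1: "Q1 = Qfun J1 c1 A1" "finite J1" "\<forall>j\<in>J1. goodexp (A1 j)"
    using assms(1) unfolding Qclass_def by auto
  obtain J2 c2 A2 where 2: "Q2 = Qfun J2 c2 A2" "finite J2" "\<forall>j\<in>J2. goodexp (A2 j)"
    using assms(2) unfolding Qclass_def by auto
  define J where "J = (\<lambda>j. 2*j) ` J1 \<union> (\<lambda>j. 2*j+1) ` J2"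
  define c where "c j = (if even j then c1 (j div 2) else c2 (j div 2))" for j :: nat
  define A where "A j = (if even j then A1 (j div 2) else A2 (j div 2))" for j :: nat
  have inj1: "inj_on (\<lambda>j::nat. 2*j) J1" by (auto simp: inj_on_def)
  have inj2: "inj_on (\<lambda>j::nat. 2*j+1) J2" by (auto simp: inj_on_def)
  have disj: "(\<lambda>j::nat. 2*j) ` J1 \<inter> (\<lambda>j. 2*j+1) ` J2 = {}" by auto presburger
  have "Qfun J c A y = Q1 y + Q2 y" for y
  proof -
    have "Qfun J c A y = (\<Sum>j\<in>(\<lambda>j. 2*j) ` J1. c j * exp (ev (A j) y)) + (\<Sum>j\<in>(\<lambda>j. 2*j+1) ` J2. c j * exp (ev (A j) y))"
      unfolding J_def Qfun_def by (rule sum.union_disjoint) (use 1 2 disj in auto)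
    also have "(\<Sum>j\<in>(\<lambda>j. 2*j) ` J1. c j * exp (ev (A j) y)) = Q1 y"
      unfolding sum.reindex[OF inj1] 1 Qfun_def by (simp add: c_def A_def)
    also have "(\<Sum>j\<in>(\<lambda>j. 2*j+1) ` J2. c j * exp (ev (A j) y)) = Q2 y"
      unfolding sum.reindex[OF inj2] 2 Qfun_def comp_def by (rule sum.cong) (auto simp: c_def A_def)
    finally show ?thesis .
  qed
  moreover have "finite J" "\<forall>j\<in>J. goodexp (A j)" using 1 2 unfolding J_def A_def by auto
  ultimately show ?thesis unfolding Qclass_def by (auto intro!: exI[of _ J] exI[of _ c] exI[of _ A])
qed

lemma goodexp_add: "goodexp A \<Longrightarrow> goodexp B \<Longrightarrow> goodexp (\<lambda>r. A r + B r)"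
proof -
  assume a: "goodexp A" "goodexp B"
  then obtain r where r: "A r \<noteq> 0" unfolding goodexp_def by auto
  then have "A r + B r \<noteq> 0" using a unfolding goodexp_def by (smt (verit))
  then show ?thesis using a good_rates_add unfolding goodexp_def by (auto intro: add_nonneg_nonneg)
qed

lemma Qclass_mult:
  assumes "Q1 \<in> Qclass" "Q2 \<in> Qclass" shows "(\<lambda>y. Q1 y * Q2 y) \<in> Qclass"
proof -
  obtain J1 c1 A1 where 1: "Q1 = Qfun J1 c1 A1" "finite J1" "\<forall>j\<in>J1. goodexp (A1 j)"
    using assms(1) unfolding Qclass_def by auto
  obtain J2 c2 A2 where 2: "Q2 = Qfun J2 c2 A2" "finite J2" "\<forall>j\<in>J2. goodexp (A2 j)"
    using assms(2) unfolding Qclass_def by auto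
  define J where "J = prod_encode ` (J1 \<times> J2)"
  define c where "c j = c1 (fst (prod_decode j)) * c2 (snd (prod_decode j))" for j
  define A where "A j = (\<lambda>r. A1 (fst (prod_decode j)) r + A2 (snd (prod_decode j)) r)" for j
  have "Qfun J c A y = Q1 y * Q2 y" for y
  proof -
    have "Qfun J c A y = (\<Sum>p\<in>J1 \<times> J2. c1 (fst p) * c2 (snd p) * exp (ev (\<lambda>r. A1 (fst p) r + A2 (snd p) r) y))"
      unfolding Qfun_def J_def by (simp add: sum.reindex[OF inj_prod_encode] c_def A_def)
    also have "\<dots> = (\<Sum>p\<in>J1 \<times> J2. (c1 (fst p) * exp (ev (A1 (fst p)) y)) * (c2 (snd p) * exp (ev (A2 (snd p)) y)))"
    proof (rule sum.cong)
      fix p assume "p \<in> J1 \<times> J2"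
      then have "goodexp (A1 (fst p))" "goodexp (A2 (snd p))" using 1 2 by auto
      then have "ev (\<lambda>r. A1 (fst p) r + A2 (snd p) r) y = ev (A1 (fst p)) y + ev (A2 (snd p)) y"
        using ev_add unfolding goodexp_def by metis
      then show "c1 (fst p) * c2 (snd p) * exp (ev (\<lambda>r. A1 (fst p) r + A2 (snd p) r) y) =
          (c1 (fst p) * exp (ev (A1 (fst p)) y)) * (c2 (snd p) * exp (ev (A2 (snd p)) y))"
        by (simp add: exp_add)
    qed simp
    also have "\<dots> = Q1 y * Q2 y"
      unfolding 1 2 Qfun_def sum_product sum.cartesian_product by (simp add: case_prod_beta)
    finally show ?thesis .
  qed
  moreover have "finite J" using 1 2 unfolding J_def by auto
  moreover have "\<forall>j\<in>J. goodexp (A j)" using 1 2 unfolding J_def A_def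
    by (auto intro!: goodexp_add)
  ultimately show ?thesis unfolding Qclass_def by (auto intro!: exI[of _ J] exI[of _ c] exI[of _ A])
qed

lemma Qclass_scale:
  assumes "Q \<in> Qclass" shows "(\<lambda>y. k * Q y) \<in> Qclass"
proof -
  obtain J c A where 1: "Q = Qfun J c A" "finite J" "\<forall>j\<in>J. goodexp (A j)"
    using assms(1) unfolding Qclass_def by auto
  have "(\<lambda>y. k * Q y) = Qfun J (\<lambda>j. k * c j) A"
    unfolding 1 Qfun_def by (auto simp: sum_distrib_left mult.assoc)
  then show ?thesis using 1 unfolding Qclass_def by auto
qed

lemma Qclass_base: "(\<lambda>y. exp (exp (exp u * y))) \<in> Qclass"
proof -
  define A where "A = (\<lambda>(j::nat) r. if r = exp u then (1::real) else 0)"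
  have "{r. A 0 r \<noteq> 0} = {exp u}" unfolding A_def by auto
  then have ev: "ev (A 0) y = exp (exp u * y)" for y unfolding ev_def by (simp add: A_def)
  have "goodexp (A 0)" unfolding goodexp_def good_rates_def A_def by auto
  moreover have "(\<lambda>y. exp (exp (exp u * y))) = Qfun {0} (\<lambda>_. 1) A"
    unfolding Qfun_def using ev by auto
  ultimately show ?thesis unfolding Qclass_def by (auto intro!: exI[of _ "{0}"])
qed

lemma Qclass_dichotomy:
  assumes "Q \<in> Qclass"
  shows "Q = (\<lambda>y. 0) \<or> filterlim (\<lambda>y. \<bar>Q y\<bar>) at_top at_top"
proof -
  obtain J c A where 1: "Q = Qfun J c A" "finite J" "\<forall>j\<in>J. goodexp (A j)"
    using assms(1) unfolding Qclass_def by auto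
  show ?thesis
  proof (cases "\<exists>B\<in>A ` J. (\<Sum>j\<in>{j\<in>J. A j = B}. c j) \<noteq> 0")
    case True
    then show ?thesis using Q_grow[OF 1(2), of A c] 1 unfolding Qfun_def by auto
  next
    case False
    then show ?thesis using Q_zero[OF 1(2), of A c] 1 unfolding Qfun_def by auto
  qed
qed

lemma gen_alg_Qclass:
  assumes "f \<in> gen_alg (range (\<lambda>u. (\<lambda>a t. exp (exp (exp u * yf a t)))))"
  shows "\<exists>Q\<in>Qclass. f = (\<lambda>a t. Q (yf a t))"
  using assms
proof (induction rule: gen_alg.induct)
  case (gen_base x)
  then obtain u where "x = (\<lambda>a t. exp (exp (exp u * yf a t)))" by auto
  then show ?case using Qclass_base[of u] by (intro bexI[of _ "\<lambda>y. exp (exp (exp u * y))"]) auto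
next
  case (gen_add f g)
  then obtain Q1 Q2 where "Q1 \<in> Qclass" "Q2 \<in> Qclass" "f = (\<lambda>a t. Q1 (yf a t))" "g = (\<lambda>a t. Q2 (yf a t))" by auto
  then show ?case using Qclass_add unfolding seq_add_def by (intro bexI[of _ "\<lambda>y. Q1 y + Q2 y"]) auto
next
  case (gen_mult f g)
  then obtain Q1 Q2 where "Q1 \<in> Qclass" "Q2 \<in> Qclass" "f = (\<lambda>a t. Q1 (yf a t))" "g = (\<lambda>a t. Q2 (yf a t))" by auto
  then show ?case using Qclass_mult unfolding seq_mult_def by (intro bexI[of _ "\<lambda>y. Q1 y * Q2 y"]) auto
next
  case (gen_scale f k)
  then obtain Q where "Q \<in> Qclass" "f = (\<lambda>a t. Q (yf a t))" by auto
  then show ?case using Qclass_scale unfolding seq_scale_def by (intro bexI[of _ "\<lambda>y. k * Q y"]) auto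
qed




lemma Qclass_complex:
  assumes "Q \<in> Qclass"
  shows "\<exists>Qc. Qc holomorphic_on UNIV \<and> (\<forall>y. Qc (complex_of_real y) = complex_of_real (Q y))"
proof -
  obtain J c A where 1: "Q = Qfun J c A" "finite J" "\<forall>j\<in>J. goodexp (A j)"
    using assms(1) unfolding Qclass_def by auto
  define Qc where "Qc z = (\<Sum>j\<in>J. complex_of_real (c j) *
      exp (\<Sum>r\<in>{r. A j r \<noteq> 0}. complex_of_real (A j r) * exp (complex_of_real r * z)))" for z
  have "Qc holomorphic_on UNIV" unfolding Qc_def by (intro holomorphic_intros)
  moreover have "Qc (complex_of_real y) = complex_of_real (Q y)" for y
  proof -
    have e: "complex_of_real (exp (\<Sum>r\<in>S. a r * exp (r * y))) =
        exp (\<Sum>r\<in>S. complex_of_real (a r) * exp (complex_of_real r * complex_of_real y))" for S a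
    proof -
      have "complex_of_real (exp (\<Sum>r\<in>S. a r * exp (r * y))) = exp (complex_of_real (\<Sum>r\<in>S. a r * exp (r * y)))"
        by (rule exp_of_real[symmetric])
      also have "complex_of_real (\<Sum>r\<in>S. a r * exp (r * y)) = (\<Sum>r\<in>S. complex_of_real (a r) * exp (complex_of_real r * complex_of_real y))"
        unfolding of_real_sum by (rule sum.cong) (auto simp: exp_of_real[symmetric])
      finally show ?thesis .
    qed
    show ?thesis unfolding Qc_def 1 Qfun_def ev_def of_real_sum of_real_mult e ..
  qed
  ultimately show ?thesis by blast
qed

lemma Qclass_countable_shift:
  assumes Q: "Q \<in> Qclass" and nz: "Q \<noteq> (\<lambda>y. 0)"
  shows "countable {y. Q (y + 1) = Q y}"
proof (rule ccontr)
  assume unc: "\<not> countable {y. Q (y + 1) = Q y}"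
  have lim: "filterlim (\<lambda>y. \<bar>Q y\<bar>) at_top at_top" using Qclass_dichotomy[OF Q] nz by auto
  obtain Qc where Qc: "Qc holomorphic_on UNIV" "\<And>y. Qc (complex_of_real y) = complex_of_real (Q y)"
    using Qclass_complex[OF Q] by blast
  define Dc where "Dc z = Qc (z + 1) - Qc z" for z
  have hD: "Dc holomorphic_on UNIV" unfolding Dc_def
    by (intro holomorphic_intros holomorphic_on_compose_gen[OF _ Qc(1), unfolded o_def]) auto
  have sub: "complex_of_real ` {y. Q (y + 1) = Q y} \<subseteq> {z. Dc z = (\<lambda>_. 0) z}"
  proof
    fix z assume "z \<in> complex_of_real ` {y. Q (y + 1) = Q y}"
    then obtain y where "z = complex_of_real y" "Q (y + 1) = Q y" by auto
    moreover have "complex_of_real y + 1 = complex_of_real (y + 1)" by simp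
    ultimately have "Dc z = Qc (complex_of_real (y + 1)) - Qc (complex_of_real y)" unfolding Dc_def by simp
    also have "\<dots> = 0" by (simp only: Qc(2) \<open>Q (y + 1) = Q y\<close>) simp
    finally show "z \<in> {z. Dc z = (\<lambda>_. 0) z}" by simp
  qed
  have "uncountable {z. Dc z = (\<lambda>_. 0) z}"
  proof
    assume "countable {z. Dc z = (\<lambda>_. 0) z}"
    then have "countable (complex_of_real ` {y. Q (y + 1) = Q y})" using sub countable_subset by blast
    then have "countable {y. Q (y + 1) = Q y}"
      by (rule countable_image_inj_on) (auto simp: inj_on_def)
    then show False using unc by simp
  qed
  then have "Dc = (\<lambda>_. 0)" by (rule holomorphic_countable_equal_UNIV[OF hD holomorphic_on_const])
  then have per: "Q (y + 1) = Q y" for y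
  proof -
    assume "Dc = (\<lambda>_. 0)"
    then have "Dc (complex_of_real y) = 0" by simp
    then have "complex_of_real (Q (y + 1)) = complex_of_real (Q y)"
      unfolding Dc_def using Qc(2)[of "y+1"] Qc(2)[of y] by simp
    then show ?thesis by simp
  qed
  have "Q (real n) = Q 0" for n
    by (induction n) (auto simp: per[of "real _", symmetric] add.commute)
  moreover have "filterlim (\<lambda>n. \<bar>Q (real n)\<bar>) at_top sequentially"
    by (rule filterlim_compose[OF lim filterlim_real_sequentially])
  then have "eventually (\<lambda>n. \<bar>Q (real n)\<bar> > \<bar>Q 0\<bar>) sequentially"
    by (simp add: filterlim_at_top_dense)
  then obtain n where "\<bar>Q (real n)\<bar> > \<bar>Q 0\<bar>" using eventually_sequentially by auto
  ultimately show False by simp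
qed




lemma sum_group_rates:
  assumes "finite K"
  shows "(\<Sum>i\<in>K. a i * exp (b i * y)) = ev (\<lambda>r. \<Sum>i\<in>{i\<in>K. b i = r}. a i) y"
proof -
  have "ev (\<lambda>r. \<Sum>i\<in>{i\<in>K. b i = r}. a i) y = (\<Sum>r\<in>b ` K. (\<Sum>i\<in>{i\<in>K. b i = r}. a i) * exp (r * y))"
  proof (rule ev_superset)
    show "finite (b ` K)" using assms by simp
    show "{r. (\<Sum>i\<in>{i\<in>K. b i = r}. a i) \<noteq> 0} \<subseteq> b ` K"
    proof
      fix r assume "r \<in> {r. (\<Sum>i\<in>{i\<in>K. b i = r}. a i) \<noteq> 0}"
      then have "{i\<in>K. b i = r} \<noteq> {}" by (intro notI) simp
      then show "r \<in> b ` K" by auto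
    qed
  qed
  also have "\<dots> = (\<Sum>i\<in>K. a i * exp (b i * y))"
    by (subst sum.image_gen[OF assms, of _ b]) (auto simp: sum_distrib_right intro!: sum.cong)
  finally show ?thesis by simp
qed

lemma alg_indep_X:
  fixes yf :: "'i \<Rightarrow> real \<Rightarrow> real"
  assumes yf: "\<And>a t. yf a t \<ge> t"
  shows "alg_indep (range (\<lambda>u. (\<lambda>a t. exp (exp (exp u * yf a t)))))"
  unfolding alg_indep_def
proof (intro allI impI, elim conjE)
  fix n and xs and p :: "(nat \<Rightarrow>\<^sub>0 nat) \<Rightarrow>\<^sub>0 real"
  let ?xf = "\<lambda>u. (\<lambda>a t. exp (exp (exp u * yf a t)))"
  assume inj: "inj_on xs {..<n}" and sub: "xs ` {..<n} \<subseteq> range ?xf" and p0: "p \<noteq> 0"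
    and c0: "Poly_Mapping.lookup p 0 = 0"
    and keys: "\<forall>m\<in>Poly_Mapping.keys p. Poly_Mapping.keys m \<subseteq> {..<n}"
  define w where "w i = (SOME u. xs i = ?xf u)" for i
  have xw: "xs i = ?xf (w i)" if "i < n" for i
  proof -
    have "xs i \<in> range ?xf" using sub that by auto
    then have "\<exists>u. xs i = ?xf u" by auto
    then show ?thesis unfolding w_def by (rule someI_ex)
  qed
  have injw: "inj_on w {..<n}"
  proof (rule inj_onI)
    fix i j assume "i \<in> {..<n}" "j \<in> {..<n}" "w i = w j"
    then have "xs i = xs j" using xw by simp
    then show "i = j" using inj \<open>i \<in> {..<n}\<close> \<open>j \<in> {..<n}\<close> by (simp add: inj_on_eq_iff)
  qed
  define Am where "Am m r = (\<Sum>i\<in>{i\<in>Poly_Mapping.keys m. exp (w i) = r}. real (Poly_Mapping.lookup m i))" for m r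
  have Am_at: "Am m (exp (w i)) = real (Poly_Mapping.lookup m i)"
    if "i < n" "Poly_Mapping.keys m \<subseteq> {..<n}" for m i
  proof -
    have "{k\<in>Poly_Mapping.keys m. exp (w k) = exp (w i)} = (if i \<in> Poly_Mapping.keys m then {i} else {})"
      using injw that unfolding inj_on_def by auto
    then show ?thesis unfolding Am_def by (auto simp: in_keys_iff)
  qed
  have good: "goodexp (Am m)" if m: "m \<in> Poly_Mapping.keys p" for m
  proof -
    have km: "Poly_Mapping.keys m \<subseteq> {..<n}" using keys m by auto
    have "m \<noteq> 0" using m c0 by (auto simp: in_keys_iff)
    then obtain i where i: "i \<in> Poly_Mapping.keys m" by (metis keys_eq_empty ex_in_conv)
    then have "i < n" using km by auto
    have "Am m (exp (w i)) \<noteq> 0" using Am_at[OF \<open>i < n\<close> km] i by (simp add: in_keys_iff)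
    moreover have "\<forall>r. Am m r \<ge> 0" unfolding Am_def by (auto intro: sum_nonneg)
    moreover have "{r. Am m r \<noteq> 0} \<subseteq> (\<lambda>i. exp (w i)) ` Poly_Mapping.keys m"
    proof
      fix r assume "r \<in> {r. Am m r \<noteq> 0}"
      then have "{i\<in>Poly_Mapping.keys m. exp (w i) = r} \<noteq> {}" unfolding Am_def
        by (intro notI) simp
      then show "r \<in> (\<lambda>i. exp (w i)) ` Poly_Mapping.keys m" by auto
    qed
    then have "finite {r. Am m r \<noteq> 0}" "\<forall>r. Am m r \<noteq> 0 \<longrightarrow> r > 0"
      by (auto intro: finite_subset)
    ultimately show ?thesis unfolding goodexp_def good_rates_def by blast
  qed
  define Qp where "Qp y = (\<Sum>m\<in>Poly_Mapping.keys p. Poly_Mapping.lookup p m * exp (ev (Am m) y))" for y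
  have peval: "poly_eval p xs a t = Qp (yf a t)" for a t
    unfolding poly_eval_def Qp_def
  proof (rule sum.cong[OF refl])
    fix m assume m: "m \<in> Poly_Mapping.keys p"
    have km: "Poly_Mapping.keys m \<subseteq> {..<n}" using keys m by auto
    have "(\<Prod>i\<in>Poly_Mapping.keys m. xs i a t ^ Poly_Mapping.lookup m i)
        = (\<Prod>i\<in>Poly_Mapping.keys m. exp (real (Poly_Mapping.lookup m i) * exp (exp (w i) * yf a t)))"
      by (rule prod.cong[OF refl]) (use km xw in \<open>auto simp: exp_of_nat_mult\<close>)
    also have "\<dots> = exp (\<Sum>i\<in>Poly_Mapping.keys m. real (Poly_Mapping.lookup m i) * exp (exp (w i) * yf a t))"
      by (simp add: exp_sum)
    also have "(\<Sum>i\<in>Poly_Mapping.keys m. real (Poly_Mapping.lookup m i) * exp (exp (w i) * yf a t)) = ev (Am m) (yf a t)"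
      unfolding Am_def by (rule sum_group_rates) simp
    finally show "Poly_Mapping.lookup p m * (\<Prod>i\<in>Poly_Mapping.keys m. xs i a t ^ Poly_Mapping.lookup m i)
        = Poly_Mapping.lookup p m * exp (ev (Am m) (yf a t))" by simp
  qed
  have distinct: "Am m \<noteq> Am m'" if mm: "m \<in> Poly_Mapping.keys p" "m' \<in> Poly_Mapping.keys p" "m \<noteq> m'" for m m'
  proof
    assume eq: "Am m = Am m'"
    obtain i where i: "Poly_Mapping.lookup m i \<noteq> Poly_Mapping.lookup m' i"
      using mm(3) poly_mapping_eqI by metis
    have km: "Poly_Mapping.keys m \<subseteq> {..<n}" "Poly_Mapping.keys m' \<subseteq> {..<n}" using keys mm by auto
    have "i \<in> Poly_Mapping.keys m \<or> i \<in> Poly_Mapping.keys m'" using i by (auto simp: in_keys_iff)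
    then have "i < n" using km by auto
    then have "real (Poly_Mapping.lookup m i) = real (Poly_Mapping.lookup m' i)"
      using Am_at[OF _ km(1)] Am_at[OF _ km(2)] eq by metis
    then show False using i by simp
  qed
  obtain m0 where m0: "m0 \<in> Poly_Mapping.keys p" using p0 by (metis keys_eq_empty ex_in_conv)
  have "{j\<in>Poly_Mapping.keys p. Am j = Am m0} = {m0}" using distinct m0 by auto
  then have nz: "\<exists>B\<in>Am ` Poly_Mapping.keys p. (\<Sum>j\<in>{j\<in>Poly_Mapping.keys p. Am j = B}. Poly_Mapping.lookup p j) \<noteq> 0"
    using m0 by (intro bexI[of _ "Am m0"]) (auto simp: in_keys_iff)
  have "filterlim (\<lambda>y. \<bar>Qp y\<bar>) at_top at_top"
    unfolding Qp_def by (rule Q_grow[OF finite_keys good nz])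
  then have "eventually (\<lambda>y. \<bar>Qp y\<bar> > 0) at_top" unfolding filterlim_at_top_dense by blast
  then obtain R where R: "\<And>y. y \<ge> R \<Longrightarrow> \<bar>Qp y\<bar> > 0" by (auto simp: eventually_at_top_linorder)
  have "poly_eval p xs undefined R \<noteq> 0" using R[OF yf[where a=undefined and t=R]] peval by simp
  then show "poly_eval p xs \<noteq> (\<lambda>a t. 0)" by auto
qed




lemma Qclass_continuous: "Q \<in> Qclass \<Longrightarrow> continuous_on UNIV Q"
  unfolding Qclass_def Qfun_def ev_def by (auto intro!: continuous_intros)

theorem mainTheorem15:
  fixes r :: "'i rel"
  assumes "card_order r"
    and "is_addN r"
  shows "strongly_algebrable (UNIV :: real set) (AN r)"
proof -
  have Cr: "Card_order r" and Fr: "Field r = UNIV"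
    using card_order_on_Card_order[OF assms(1)] by auto
  obtain F where F: "F \<subseteq> null_sets lebesgue" "ordIso2 (card_of F) r" "\<Union>F \<notin> null_sets (lebesgue :: real measure)"
    and small: "\<And>G. G \<subseteq> null_sets (lebesgue :: real measure) \<Longrightarrow> ordLess2 (card_of G) r \<Longrightarrow> \<Union>G \<in> null_sets lebesgue"
    using assms(2) unfolding is_addN_def by blast
  have "ordIso2 (card_of (UNIV::'i set)) (card_of F)"
    using card_of_Field_ordIso[OF Cr] F(2) Fr by (metis ordIso_symmetric ordIso_transitive)
  then obtain e where e: "bij_betw e (UNIV::'i set) F" using card_of_ordIso by blast
  then have eF: "e ` UNIV = F" by (simp add: bij_betw_def)
  obtain B where B: "B \<subseteq> \<Union>F" "B \<notin> sets lebesgue" using exists_nonmeasurable_subset[OF F(3)] by blast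
  define S where "S \<alpha> = \<Union>((\<lambda>\<beta>. e \<beta> \<inter> B) ` underS r \<alpha>)" for \<alpha>
  have Snull: "S \<alpha> \<in> null_sets lebesgue" for \<alpha>
  proof -
    have "(\<lambda>\<beta>. e \<beta> \<inter> B) ` underS r \<alpha> \<subseteq> null_sets lebesgue"
    proof
      fix N assume "N \<in> (\<lambda>\<beta>. e \<beta> \<inter> B) ` underS r \<alpha>"
      then obtain \<beta> where "N = e \<beta> \<inter> B" by auto
      moreover have "e \<beta> \<in> null_sets lebesgue" using F(1) eF by auto
      ultimately show "N \<in> null_sets lebesgue" using lebesgue_complete_subset by blast
    qed
    moreover have "ordLess2 (card_of ((\<lambda>\<beta>. e \<beta> \<inter> B) ` underS r \<alpha>)) r"
      using card_of_image ordLeq_ordLess_trans card_of_underS[OF Cr] Fr by blast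
    ultimately show ?thesis unfolding S_def using small by blast
  qed
  have SB: "S \<alpha> \<subseteq> B" for \<alpha> unfolding S_def by auto
  define yf where "yf \<alpha> t = t + indicator (S \<alpha>) t" for \<alpha> t
  define xf where "xf u = (\<lambda>\<alpha> t. exp (exp (exp u * yf \<alpha> t)))" for u
  define X where "X = range xf"
  have yf_ge: "yf \<alpha> t \<ge> t" for \<alpha> t unfolding yf_def by (simp add: indicator_def)
  have "inj xf"
  proof (rule injI)
    fix u v assume "xf u = xf v"
    then have "xf u undefined 1 = xf v undefined 1" by simp
    then have "exp u * yf undefined 1 = exp v * yf undefined 1" unfolding xf_def by simp
    moreover have "yf undefined 1 > 0" using yf_ge[where \<alpha>=undefined and t=1] by simp
    ultimately show "u = v" by simp
  qed
  then have "ordIso2 (card_of (UNIV :: real set)) (card_of X)"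
    unfolding X_def using card_of_ordIso inj_on_imp_bij_betw by blast
  then have card: "ordIso2 (card_of X) (card_of (UNIV :: real set))" by (rule ordIso_symmetric)
  have indep: "alg_indep X" unfolding X_def xf_def by (rule alg_indep_X[OF yf_ge])
  have AN: "f \<in> AN r" if f: "f \<in> gen_alg X" "f \<noteq> (\<lambda>a t. 0)" for f
  proof -
    obtain Q where Q: "Q \<in> Qclass" "f = (\<lambda>a t. Q (yf a t))"
      using gen_alg_Qclass[of f yf] f(1) unfolding X_def xf_def by blast
    have Qnz: "Q \<noteq> (\<lambda>y. 0)" using f(2) Q(2) by auto
    have Qc: "continuous_on UNIV Q" by (rule Qclass_continuous[OF Q(1)])
    have Qm[measurable]: "Q \<in> borel_measurable borel" by (rule borel_measurable_continuous_onI[OF Qc])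
    have yfm: "yf \<alpha> \<in> borel_measurable lebesgue" for \<alpha>
    proof -
      have [measurable]: "S \<alpha> \<in> sets lebesgue" using Snull[of \<alpha>] by auto
      have "(\<lambda>x::real. x) \<in> borel_measurable lebesgue"
        by (rule measurable_completion) (simp add: measurable_ident_sets)
      moreover have "indicator (S \<alpha>) \<in> borel_measurable lebesgue"
        by (rule borel_measurable_indicator) fact
      ultimately show ?thesis unfolding yf_def by (rule borel_measurable_add)
    qed
    have meas: "\<forall>\<alpha>. f \<alpha> \<in> borel_measurable lebesgue"
      using measurable_compose[OF yfm Qm] Q(2) by simp
    define g where "g t = Q (t + indicator B t)" for t
    have conv: "kconv r (\<lambda>\<alpha>. f \<alpha> t) (g t)" for t
    proof (cases "t \<in> B")
      case True
      then obtain \<beta> where \<beta>: "t \<in> e \<beta>" using B(1) eF by auto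
      show ?thesis unfolding kconv_def
      proof (intro allI impI)
        fix U assume U: "open U \<and> g t \<in> U"
        show "\<exists>a0\<in>Field r. \<forall>a. (a0, a) \<in> r \<and> a \<noteq> a0 \<longrightarrow> f a t \<in> U"
        proof (intro bexI[of _ \<beta>] allI impI)
          fix \<alpha> assume "(\<beta>, \<alpha>) \<in> r \<and> \<alpha> \<noteq> \<beta>"
          then have "\<beta> \<in> underS r \<alpha>" unfolding underS_def by auto
          then have "t \<in> S \<alpha>" unfolding S_def using \<beta> True by auto
          then have "f \<alpha> t = g t" unfolding Q(2) yf_def g_def using True by simp
          then show "f \<alpha> t \<in> U" using U by simp
        qed (simp add: Fr)
      qed
    next
      case False
      then have "f \<alpha> t = g t" for \<alpha> unfolding Q(2) yf_def g_def using SB by (auto simp: indicator_def)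
      then show ?thesis unfolding kconv_def using Fr by auto
    qed
    then have AE: "AE t in lebesgue. kconv r (\<lambda>\<alpha>. f \<alpha> t) (g t)" by simp
    have gnm: "g \<notin> borel_measurable lebesgue"
    proof
      assume gm[measurable]: "g \<in> borel_measurable lebesgue"
      let ?Z = "{y. Q (y + 1) = Q y}"
      have Zc: "countable ?Z" by (rule Qclass_countable_shift[OF Q(1) Qnz])
      have Zn: "?Z \<in> null_sets lebesgue"
        by (rule null_sets_completionI[OF countable_imp_null_set_lborel[OF Zc]])
      have Qml[measurable]: "Q \<in> borel_measurable lebesgue"
        by (rule measurable_completion) (simp add: Qm)
      have Mset: "{t \<in> space lebesgue. g t \<noteq> Q t} \<in> sets lebesgue" by measurable
      have "B = {t \<in> space lebesgue. g t \<noteq> Q t} \<union> (B \<inter> ?Z)"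
      proof (intro set_eqI iffI)
        fix t assume t: "t \<in> B"
        then have "g t = Q (t + 1)" unfolding g_def by simp
        then show "t \<in> {t \<in> space lebesgue. g t \<noteq> Q t} \<union> (B \<inter> ?Z)" using t by auto
      next
        fix t assume t: "t \<in> {t \<in> space lebesgue. g t \<noteq> Q t} \<union> (B \<inter> ?Z)"
        show "t \<in> B"
        proof (rule ccontr)
          assume "t \<notin> B"
          then have "g t = Q t" unfolding g_def by simp
          then show False using t \<open>t \<notin> B\<close> by auto
        qed
      qed
      moreover have BZ: "B \<inter> ?Z \<in> null_sets lebesgue"
        by (rule lebesgue_complete_subset[OF _ Zn]) (rule Int_lower2)
      have "{t \<in> space lebesgue. g t \<noteq> Q t} \<union> (B \<inter> ?Z) \<in> sets lebesgue"
        by (rule sets.Un[OF Mset null_setsD2[OF BZ]])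
      ultimately have "B \<in> sets lebesgue" by simp
      then show False using B(2) by simp
    qed
    show "f \<in> AN r" unfolding AN_def using meas gnm AE by blast
  qed
  show ?thesis unfolding strongly_algebrable_def using card indep AN by blast
qed


end
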